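(* Let $q\ge1$, $n=2^q$, and take the operator basis $\{\tilde E_\alpha\}$ of the $n\times n$ complex matrices to be the matrix units $\{n_{[ij]}\}_{1\le i,j\le n}$, indexing $\alpha$ by pairs $(i,j)$. Then there exist a density matrix $\rho$ on $\mathbb{C}^n\otimes\mathbb{C}^n$ and an operator $R=\sum_m a_m M_m^\dagger M_m$ (for some POVM $\{M_m\}$ and real numbers $a_m$) such that the tensor $A_{\alpha\beta\gamma\delta}=\mathrm{tr}\big[R(\tilde E_\alpha\otimes\tilde E_\gamma)\rho(\tilde E_\beta^\dagger\otimes\tilde E_\delta^\dagger)\big]$ is diagonal with nonzero diagonal entries, i.e. $A_{\alpha\beta\gamma\delta}=0$ whenever $(\alpha,\beta)\ne(\gamma,\delta)$, and $A_{\alpha\beta\alpha\beta}\ne0$ for all $\alpha,\beta$.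
   Context: $n_{[ij]}$ denotes the $n\times n$ matrix whose $(i,j)$ entry is $1$ and all other entries are $0$. In a two-player static quantum game, $\rho$ is the initial state shared between the two players (each holding one $\mathbb{C}^n$ factor), $\{M_m\}$ is the referee's POVM and $a_m$ the payoff to player I on outcome $m$, so that player I's payoff for chi-matrix strategies $\chi,\xi$ is $\sum_{\alpha,\beta,\gamma,\delta}\mathrm{Re}[\chi_{\alpha\beta}\xi_{\gamma\delta}A_{\alpha\beta\gamma\delta}]$. *)

theory Defs
  imports "HOL-Analysis.Analysis"
begin

text \<open>Square complex matrices indexed by a finite type 'n (so n = CARD('n));
  operators on C^n (x) C^n are matrices indexed by 'n \<times> 'n.\<close>

type_synonym ('n) cmat = "complex ^ 'n ^ 'n"

definition adj :: "complex ^ 'b ^ 'a \<Rightarrow> complex ^ 'a ^ 'b" where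
  "adj X = (\<chi> i j. cnj (X $ j $ i))"

definition tr :: "complex ^ 'a ^ 'a \<Rightarrow> complex" where
  "tr X = (\<Sum>i\<in>UNIV. X $ i $ i)"

definition kron :: "('n::finite) cmat \<Rightarrow> ('n::finite) cmat \<Rightarrow> complex ^ ('n \<times> 'n) ^ ('n \<times> 'n)" where
  "kron X Y = (\<chi> p r. X $ fst p $ fst r * Y $ snd p $ snd r)"

definition matunit :: "'n \<Rightarrow> 'n \<Rightarrow> ('n::finite) cmat" where
  "matunit i j = (\<chi> r c. if r = i \<and> c = j then 1 else 0)"

definition cinner :: "complex ^ 'a \<Rightarrow> complex ^ 'a \<Rightarrow> complex" where
  "cinner v w = (\<Sum>i\<in>UNIV. cnj (v $ i) * w $ i)"

definition density :: "complex ^ 'a ^ 'a \<Rightarrow> bool" where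
  "density \<rho> \<longleftrightarrow> adj \<rho> = \<rho>
     \<and> (\<forall>v. Im (cinner v (\<rho> *v v)) = 0 \<and> Re (cinner v (\<rho> *v v)) \<ge> 0)
     \<and> tr \<rho> = 1"

definition povm :: "nat \<Rightarrow> (nat \<Rightarrow> complex ^ 'a ^ 'a) \<Rightarrow> bool" where
  "povm K M \<longleftrightarrow> (\<Sum>m<K. adj (M m) ** M m) = mat 1"

definition payoffA :: "complex ^ ('n::finite \<times> 'n) ^ ('n \<times> 'n) \<Rightarrow> complex ^ ('n \<times> 'n) ^ ('n \<times> 'n)
    \<Rightarrow> 'n \<times> 'n \<Rightarrow> 'n \<times> 'n \<Rightarrow> 'n \<times> 'n \<Rightarrow> 'n \<times> 'n \<Rightarrow> complex" where
  "payoffA R \<rho> \<alpha> \<beta> \<gamma> \<delta> =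
     tr (R ** kron (case_prod matunit \<alpha>) (case_prod matunit \<gamma>) ** \<rho>
           ** kron (adj (case_prod matunit \<beta>)) (adj (case_prod matunit \<delta>)))"

end

theory Submission
  imports Defs
begin

definition U2 :: "'a \<Rightarrow> 'b \<Rightarrow> complex ^ 'b ^ 'a" where
  "U2 a b = (\<chi> p r. if p = a \<and> r = b then 1 else 0)"

lemma mul_U2: "(X ** U2 a b) $ x $ y = (if y = b then X $ x $ a else 0)"
proof -
  have "(X ** U2 a b) $ x $ y = (\<Sum>k\<in>UNIV. if y = b then (if k = a then X $ x $ a else 0) else 0)"
    unfolding matrix_matrix_mult_def U2_def vec_lambda_beta by (rule sum.cong) auto
  then show ?thesis by (cases "y = b") auto
qed

lemma tr_formula:
  "tr (R ** U2 a b ** \<rho> ** U2 c d) = R $ d $ a * \<rho> $ b $ c"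
proof -
  have 1: "(R ** U2 a b ** \<rho>) $ x $ y = R $ x $ a * \<rho> $ b $ y" for x y
  proof -
    have "(R ** U2 a b ** \<rho>) $ x $ y = (\<Sum>k\<in>UNIV. if k = b then R $ x $ a * \<rho> $ b $ y else 0)"
      unfolding matrix_matrix_mult_def[of "R ** U2 a b"] vec_lambda_beta by (rule sum.cong) (auto simp: mul_U2)
    then show ?thesis by simp
  qed
  have "tr (R ** U2 a b ** \<rho> ** U2 c d) = (\<Sum>i\<in>UNIV. if i = d then R $ d $ a * \<rho> $ b $ c else 0)"
    unfolding tr_def by (rule sum.cong) (auto simp: mul_U2 1)
  then show ?thesis by simp
qed

lemma kron_units: "kron (matunit i j) (matunit i' j') = U2 (i, i') (j, j')"
  unfolding kron_def matunit_def U2_def vec_eq_iff by auto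

lemma adj_unit: "adj (matunit i j) = matunit j i"
  unfolding adj_def matunit_def vec_eq_iff by auto

lemma payoff_formula:
  "payoffA R \<rho> (i, j) (k, l) (i', j') (k', l') = R $ (k, k') $ (i, i') * \<rho> $ (j, j') $ (l, l')"
  unfolding payoffA_def by (simp add: adj_unit kron_units tr_formula)

lemma sum_pairs:
  "(\<Sum>p\<in>(UNIV::('n::finite \<times> 'n) set). (if fst p = snd p then f p else 0)) = (\<Sum>a\<in>UNIV. f (a, a))"
proof -
  have "(\<Sum>p\<in>(UNIV::('n \<times> 'n) set). (if fst p = snd p then f p else 0))
      = (\<Sum>a\<in>UNIV. \<Sum>b\<in>UNIV. (if a = b then f (a, b) else 0))"
    unfolding UNIV_Times_UNIV[symmetric] sum.cartesian_product by (rule sum.cong) auto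
  also have "\<dots> = (\<Sum>a\<in>UNIV. f (a, a))"
    by simp
  finally show ?thesis .
qed

definition Pm :: "complex ^ ('n::finite \<times> 'n) ^ ('n \<times> 'n)" where
  "Pm = (\<chi> p r. if fst p = snd p \<and> fst r = snd r then 1 / of_nat CARD('n) else 0)"

lemma Pm_idem: "(Pm :: complex ^ ('n::finite \<times> 'n) ^ ('n \<times> 'n)) ** Pm = Pm"
proof -
  have n0: "(of_nat CARD('n) :: complex) \<noteq> 0" by simp
  have "(\<Sum>r\<in>UNIV. (Pm :: complex ^ ('n \<times> 'n) ^ ('n \<times> 'n)) $ p $ r * Pm $ r $ s) = Pm $ p $ s" for p s
  proof -
    have "(\<Sum>r\<in>UNIV. (Pm :: complex ^ ('n \<times> 'n) ^ ('n \<times> 'n)) $ p $ r * Pm $ r $ s)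
       = (\<Sum>r\<in>(UNIV::('n \<times> 'n) set). if fst r = snd r then
            (if fst p = snd p \<and> fst s = snd s then 1 / (of_nat CARD('n))^2 else 0) else 0)"
      by (rule sum.cong) (auto simp: Pm_def power2_eq_square)
    also have "\<dots> = of_nat CARD('n) * (if fst p = snd p \<and> fst s = snd s then 1 / (of_nat CARD('n))^2 else 0)"
      by (subst sum_pairs) simp
    also have "\<dots> = Pm $ p $ s" using n0 by (simp add: Pm_def power2_eq_square)
    finally show ?thesis .
  qed
  then show ?thesis by (simp add: matrix_matrix_mult_def vec_eq_iff)
qed

lemma adj_Pm: "adj (Pm :: complex ^ ('n::finite \<times> 'n) ^ ('n \<times> 'n)) = Pm"
  by (auto simp: adj_def Pm_def vec_eq_iff)

lemma adj_IPm: "adj (mat 1 - (Pm :: complex ^ ('n::finite \<times> 'n) ^ ('n \<times> 'n))) = mat 1 - Pm"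
  by (auto simp: adj_def Pm_def vec_eq_iff mat_def)

lemma density_Pm: "density (Pm :: complex ^ ('n::finite \<times> 'n) ^ ('n \<times> 'n))"
proof -
  have n0: "(of_nat CARD('n) :: complex) \<noteq> 0" by simp
  have q: "cinner v (Pm *v v) = of_real ((cmod (\<Sum>a\<in>UNIV. v $ (a, a)))^2 / real CARD('n))"
    for v :: "complex ^ ('n \<times> 'n)"
  proof -
    let ?s = "\<Sum>a\<in>UNIV. v $ (a, a)"
    have mv: "(Pm *v v) $ p = (if fst p = snd p then ?s / of_nat CARD('n) else 0)" for p
    proof -
      have "(Pm *v v) $ p = (\<Sum>r\<in>(UNIV::('n \<times> 'n) set). if fst r = snd r then
             (if fst p = snd p then v $ r / of_nat CARD('n) else 0) else 0)"
        by (simp add: matrix_vector_mult_def Pm_def) (rule sum.cong, auto)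
      also have "\<dots> = (if fst p = snd p then ?s / of_nat CARD('n) else 0)"
        by (subst sum_pairs) (simp add: sum_divide_distrib)
      finally show ?thesis .
    qed
    have "cinner v (Pm *v v) = (\<Sum>p\<in>(UNIV::('n \<times> 'n) set). if fst p = snd p then cnj (v $ p) * (?s / of_nat CARD('n)) else 0)"
      unfolding cinner_def mv by (rule sum.cong) auto
    also have "\<dots> = cnj ?s * ?s / of_nat CARD('n)"
      by (subst sum_pairs) (simp only: sum_distrib_right[symmetric] cnj_sum times_divide_eq_right sum_divide_distrib[symmetric])
    also have "\<dots> = of_real ((cmod ?s)^2 / real CARD('n))"
    proof -
      have e: "complex_of_real ((cmod ?s)^2) = cnj ?s * ?s"
        unfolding complex_norm_square by (rule mult.commute)
      show ?thesis by (simp only: of_real_divide of_real_of_nat_eq e)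
    qed
    finally show ?thesis .
  qed
  have t: "tr (Pm :: complex ^ ('n \<times> 'n) ^ ('n \<times> 'n)) = 1"
  proof -
    have "tr (Pm :: complex ^ ('n \<times> 'n) ^ ('n \<times> 'n)) =
       (\<Sum>p\<in>(UNIV::('n \<times> 'n) set). if fst p = snd p then 1 / of_nat CARD('n) else 0)"
      unfolding tr_def by (rule sum.cong) (auto simp: Pm_def)
    also have "\<dots> = 1" using n0 by (subst sum_pairs) simp
    finally show ?thesis .
  qed
  show ?thesis unfolding density_def
    using adj_Pm t q by simp
qed

lemma msub_ldistrib: "(A::'a::comm_ring_1^'n::finite^'m) ** (B - C) = A ** B - A ** C"
  by (simp add: matrix_matrix_mult_def vec_eq_iff sum_subtractf right_diff_distrib)

lemma msub_rdistrib: "((A::'a::comm_ring_1^'n::finite^'m) - B) ** C = A ** C - B ** C"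
  by (simp add: matrix_matrix_mult_def vec_eq_iff sum_subtractf left_diff_distrib)

theorem theorem3:
  fixes q :: nat
  assumes "q \<ge> 1" and "CARD('n::finite) = 2 ^ q"
  shows "\<exists>(\<rho> :: complex ^ ('n \<times> 'n) ^ ('n \<times> 'n)) (K :: nat) M (a :: nat \<Rightarrow> real).
           density \<rho> \<and> povm K M \<and>
           (let R = (\<Sum>m<K. a m *\<^sub>R (adj (M m) ** M m)) in
             (\<forall>\<alpha> \<beta> \<gamma> \<delta>. (\<alpha>, \<beta>) \<noteq> (\<gamma>, \<delta>) \<longrightarrow> payoffA R \<rho> \<alpha> \<beta> \<gamma> \<delta> = 0) \<and>
             (\<forall>\<alpha> \<beta>. payoffA R \<rho> \<alpha> \<beta> \<alpha> \<beta> \<noteq> 0))"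
proof -
  let ?P = "Pm :: complex ^ ('n \<times> 'n) ^ ('n \<times> 'n)"
  define M where "M = (\<lambda>m::nat. if m = 0 then ?P else mat 1 - ?P)"
  define a where "a = (\<lambda>m::nat. if m = 0 then (1::real) else 0)"
  have sum2: "(\<Sum>m<2. f m) = f 0 + f (1::nat)" for f :: "nat \<Rightarrow> complex ^ ('n \<times> 'n) ^ ('n \<times> 'n)"
    by (simp add: numeral_2_eq_2)
  have IP: "(mat 1 - ?P) ** (mat 1 - ?P) = mat 1 - ?P"
    by (simp add: msub_ldistrib msub_rdistrib Pm_idem matrix_mul_lid matrix_mul_rid)
  have povm: "povm 2 M"
    unfolding povm_def sum2 M_def by (simp add: adj_Pm adj_IPm Pm_idem IP)
  have R: "(\<Sum>m<2. a m *\<^sub>R (adj (M m) ** M m)) = ?P"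
    unfolding sum2 M_def a_def by (simp add: adj_Pm Pm_idem)
  have off: "payoffA ?P ?P \<alpha> \<beta> \<gamma> \<delta> = 0" if "(\<alpha>, \<beta>) \<noteq> (\<gamma>, \<delta>)" for \<alpha> \<beta> \<gamma> \<delta>
    using that
    by (cases \<alpha>; cases \<beta>; cases \<gamma>; cases \<delta>) (auto simp: payoff_formula Pm_def)
  have on: "payoffA ?P ?P \<alpha> \<beta> \<alpha> \<beta> \<noteq> 0" for \<alpha> \<beta>
    by (cases \<alpha>; cases \<beta>) (simp add: payoff_formula Pm_def)
  show ?thesis
    apply (rule exI[of _ ?P], rule exI[of _ 2], rule exI[of _ M], rule exI[of _ a])
    using density_Pm povm R off on by (simp add: Let_def)
qed

end
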